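(* For any $n\ge1$, $$\sum_{\pi\in\mathfrak{S}_n(2413,3142)}(-1)^{\mathsf{des}\,\pi}=\begin{cases}0,&n\text{ even},\\(-1)^{(n-1)/2}\,r_{(n-1)/2},&n\text{ odd},\end{cases}$$ where $r_m:=|\mathfrak{A}_{2m+1}(2413,3142)|$.
   Context: $\mathfrak{S}_n(2413,3142)$ is the set of permutations of $[n]$ avoiding both classical patterns $2413$ and $3142$; $\mathfrak{A}_m(2413,3142)$ is the subset of $\mathfrak{S}_m(2413,3142)$ of alternating (up-down) permutations $\pi(1)<\pi(2)>\pi(3)<\cdots$. $\mathsf{des}\,\pi=\#\{i\in[n-1]:\pi(i)>\pi(i+1)\}$. *)

theory Defs
  imports Main "HOL-Combinatorics.Multiset_Permutations"
begin

(* Permutations of [n] are represented in one-line notation as lists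
   [pi(1),...,pi(n)]; list index i (0-based) holds pi(i+1). *)

definition perms :: "nat \<Rightarrow> nat list set" where
  "perms n = permutations_of_set {1..n}"

definition contains :: "nat list \<Rightarrow> nat list \<Rightarrow> bool" where
  "contains p sigma \<longleftrightarrow>
     (\<exists>f. strict_mono_on {..<length sigma} f \<and>
          (\<forall>a<length sigma. f a < length p) \<and>
          (\<forall>a<length sigma. \<forall>b<length sigma.
              (p ! (f a) < p ! (f b)) \<longleftrightarrow> (sigma ! a < sigma ! b)))"

definition avoids :: "nat list \<Rightarrow> nat list \<Rightarrow> bool" where
  "avoids p sigma \<longleftrightarrow> \<not> contains p sigma"

definition sep_perms :: "nat \<Rightarrow> nat list set" where
  "sep_perms n = {p \<in> perms n. avoids p [2,4,1,3] \<and> avoids p [3,1,4,2]}"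

definition alternating :: "nat list \<Rightarrow> bool" where
  "alternating p \<longleftrightarrow>
     (\<forall>i. Suc i < length p \<longrightarrow>
        (if even i then p ! i < p ! Suc i else p ! i > p ! Suc i))"

definition alt_sep_perms :: "nat \<Rightarrow> nat list set" where
  "alt_sep_perms m = {p \<in> sep_perms m. alternating p}"

definition des :: "nat list \<Rightarrow> nat" where
  "des p = card {i. Suc i < length p \<and> p ! i > p ! Suc i}"

definition r :: "nat \<Rightarrow> nat" where
  "r m = card (alt_sep_perms (2*m+1))"

end

theory Submission
  imports Defs
begin


definition pat1 :: "nat list \<Rightarrow> bool" where
  "pat1 p \<longleftrightarrow> (\<exists>i j k l. i<j \<and> j<k \<and> k<l \<and> l<length p \<and> p!k < p!i \<and> p!i < p!l \<and> p!l < p!j)"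
definition pat2 :: "nat list \<Rightarrow> bool" where
  "pat2 p \<longleftrightarrow> (\<exists>i j k l. i<j \<and> j<k \<and> k<l \<and> l<length p \<and> p!j < p!l \<and> p!l < p!i \<and> p!i < p!k)"

lemma len4: "length [a,b,c,d::nat] = 4" by simp

lemma less4: "(a::nat) < 4 \<longleftrightarrow> a = 0 \<or> a = 1 \<or> a = 2 \<or> a = 3" by auto

lemma contains1: "contains p [2,4,1,3] \<longleftrightarrow> pat1 p"
proof
  assume "contains p [2,4,1,3]"
  then obtain f where m: "strict_mono_on {..<4} f" and b: "\<forall>a<4. f a < length p"
    and o: "\<forall>a<4. \<forall>b<4. (p ! (f a) < p ! (f b)) \<longleftrightarrow> ([2,4,1,3::nat] ! a < [2,4,1,3::nat] ! b)"
    unfolding contains_def len4 by blast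
  have "f 0 < f 1" "f 1 < f 2" "f 2 < f 3" using m by (auto intro: strict_mono_onD)
  moreover have "f 3 < length p" using b by auto
  moreover have "p!(f 2) < p!(f 0)" "p!(f 0) < p!(f 3)" "p!(f 3) < p!(f 1)"
    using o[rule_format, of 2 0] o[rule_format, of 0 3] o[rule_format, of 3 1] by auto
  ultimately show "pat1 p" unfolding pat1_def by blast
next
  assume "pat1 p"
  then obtain i j k l where h: "i<j" "j<k" "k<l" "l<length p" "p!k < p!i" "p!i < p!l" "p!l < p!j"
    unfolding pat1_def by blast
  define f where "f = (\<lambda>a. [i,j,k,l] ! a)"
  have "strict_mono_on {..<4} f" unfolding strict_mono_on_def f_def using h
    by (auto simp: less4)
  moreover have "\<forall>a<4. f a < length p" using h by (auto simp: less4 f_def)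
  moreover have "\<forall>a<4. \<forall>b<4. (p ! (f a) < p ! (f b)) \<longleftrightarrow> ([2,4,1,3::nat] ! a < [2,4,1,3::nat] ! b)"
    using h by (auto simp: less4 f_def)
  ultimately show "contains p [2,4,1,3]" unfolding contains_def len4 by blast
qed

lemma contains2: "contains p [3,1,4,2] \<longleftrightarrow> pat2 p"
proof
  assume "contains p [3,1,4,2]"
  then obtain f where m: "strict_mono_on {..<4} f" and b: "\<forall>a<4. f a < length p"
    and o: "\<forall>a<4. \<forall>b<4. (p ! (f a) < p ! (f b)) \<longleftrightarrow> ([3,1,4,2::nat] ! a < [3,1,4,2::nat] ! b)"
    unfolding contains_def len4 by blast
  have "f 0 < f 1" "f 1 < f 2" "f 2 < f 3" using m by (auto intro: strict_mono_onD)
  moreover have "f 3 < length p" using b by auto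
  moreover have "p!(f 1) < p!(f 3)" "p!(f 3) < p!(f 0)" "p!(f 0) < p!(f 2)"
    using o[rule_format, of 1 3] o[rule_format, of 3 0] o[rule_format, of 0 2] by auto
  ultimately show "pat2 p" unfolding pat2_def by blast
next
  assume "pat2 p"
  then obtain i j k l where h: "i<j" "j<k" "k<l" "l<length p" "p!j < p!l" "p!l < p!i" "p!i < p!k"
    unfolding pat2_def by blast
  define f where "f = (\<lambda>a. [i,j,k,l] ! a)"
  have "strict_mono_on {..<4} f" unfolding strict_mono_on_def f_def using h
    by (auto simp: less4)
  moreover have "\<forall>a<4. f a < length p" using h by (auto simp: less4 f_def)
  moreover have "\<forall>a<4. \<forall>b<4. (p ! (f a) < p ! (f b)) \<longleftrightarrow> ([3,1,4,2::nat] ! a < [3,1,4,2::nat] ! b)"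
    using h by (auto simp: less4 f_def)
  ultimately show "contains p [3,1,4,2]" unfolding contains_def len4 by blast
qed

lemma sep_perms_alt: "sep_perms n = {p \<in> perms n. \<not> pat1 p \<and> \<not> pat2 p}"
  unfolding sep_perms_def avoids_def contains1 contains2 ..

lemma pat_map_mono:
  assumes "\<forall>x\<in>set p. \<forall>y\<in>set p. (g x < g y \<longleftrightarrow> x < y)"
  shows "pat1 (map g p) \<longleftrightarrow> pat1 p" "pat2 (map g p) \<longleftrightarrow> pat2 p"
proof -
  have e: "\<And>a b. a < length p \<Longrightarrow> b < length p \<Longrightarrow> (g (p!a) < g (p!b)) = (p!a < p!b)"
    using assms by (simp add: nth_mem)
  show "pat1 (map g p) \<longleftrightarrow> pat1 p" unfolding pat1_def
    by (smt (verit, ccfv_threshold) e length_map nth_map order.strict_trans)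
  show "pat2 (map g p) \<longleftrightarrow> pat2 p" unfolding pat2_def
    by (smt (verit, ccfv_threshold) e length_map nth_map order.strict_trans)
qed

lemma pat_map_anti:
  assumes "\<forall>x\<in>set p. \<forall>y\<in>set p. (g x < g y \<longleftrightarrow> y < x)"
  shows "pat1 (map g p) \<longleftrightarrow> pat2 p" "pat2 (map g p) \<longleftrightarrow> pat1 p"
proof -
  have e: "\<And>a b. a < length p \<Longrightarrow> b < length p \<Longrightarrow> (g (p!a) < g (p!b)) = (p!b < p!a)"
    using assms by (simp add: nth_mem)
  show "pat1 (map g p) \<longleftrightarrow> pat2 p" unfolding pat1_def pat2_def
    by (smt (verit, ccfv_threshold) e length_map nth_map order.strict_trans)
  show "pat2 (map g p) \<longleftrightarrow> pat1 p" unfolding pat1_def pat2_def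
    by (smt (verit, ccfv_threshold) e length_map nth_map order.strict_trans)
qed

lemma pat1_rev: "pat1 (rev p) \<longleftrightarrow> pat2 p"
proof
  assume "pat1 (rev p)"
  then obtain i j k l where h: "i<j" "j<k" "k<l" "l<length p" "rev p!k < rev p!i" "rev p!i < rev p!l" "rev p!l < rev p!j"
    unfolding pat1_def by auto
  let ?n = "length p"
  have "?n-1-l < ?n-1-k" "?n-1-k < ?n-1-j" "?n-1-j < ?n-1-i" "?n-1-i < ?n" using h by auto
  moreover have "p!(?n-1-k) < p!(?n-1-i)" "p!(?n-1-i) < p!(?n-1-l)" "p!(?n-1-l) < p!(?n-1-j)"
    using h by (auto simp: rev_nth)
  ultimately show "pat2 p" unfolding pat2_def by blast
next
  assume "pat2 p"
  then obtain i j k l where h: "i<j" "j<k" "k<l" "l<length p" "p!j < p!l" "p!l < p!i" "p!i < p!k"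
    unfolding pat2_def by auto
  let ?n = "length p"
  have "?n-1-l < ?n-1-k" "?n-1-k < ?n-1-j" "?n-1-j < ?n-1-i" "?n-1-i < length (rev p)" using h by auto
  moreover have "rev p!(?n-1-j) < rev p!(?n-1-l)" "rev p!(?n-1-l) < rev p!(?n-1-i)" "rev p!(?n-1-i) < rev p!(?n-1-k)"
    using h by (auto simp: rev_nth)
  ultimately show "pat1 (rev p)" unfolding pat1_def by blast
qed

lemma pat2_rev: "pat2 (rev p) \<longleftrightarrow> pat1 p"
  using pat1_rev[of "rev p"] by simp

lemma pat_take: "pat1 (take k p) \<Longrightarrow> pat1 p" "pat2 (take k p) \<Longrightarrow> pat2 p"
  unfolding pat1_def pat2_def by (auto simp: nth_take) (metis less_imp_le_nat)+

lemma pat_drop: "pat1 (drop k p) \<Longrightarrow> pat1 p" "pat2 (drop k p) \<Longrightarrow> pat2 p"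
proof -
  assume "pat1 (drop k p)"
  then obtain i j a l where h: "i<j" "j<a" "a<l" "l<length p - k" "p!(k+a) < p!(k+i)" "p!(k+i) < p!(k+l)" "p!(k+l) < p!(k+j)"
    unfolding pat1_def by auto
  then show "pat1 p" unfolding pat1_def
    by (rule_tac x="k+i" in exI, rule_tac x="k+j" in exI, rule_tac x="k+a" in exI, rule_tac x="k+l" in exI) auto
next
  assume "pat2 (drop k p)"
  then obtain i j a l where h: "i<j" "j<a" "a<l" "l<length p - k" "p!(k+j) < p!(k+l)" "p!(k+l) < p!(k+i)" "p!(k+i) < p!(k+a)"
    unfolding pat2_def by auto
  then show "pat2 p" unfolding pat2_def
    by (rule_tac x="k+i" in exI, rule_tac x="k+j" in exI, rule_tac x="k+a" in exI, rule_tac x="k+l" in exI) auto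
qed

lemma pat_app:
  assumes lt: "\<forall>a\<in>set xs. \<forall>b\<in>set ys. a < b"
  shows "pat1 (xs @ ys) \<Longrightarrow> pat1 xs \<or> pat1 ys" "pat2 (xs @ ys) \<Longrightarrow> pat2 xs \<or> pat2 ys"
proof -
  let ?p = "xs @ ys" and ?m = "length xs"
  have L: "\<And>a b. a < ?m \<Longrightarrow> ?m \<le> b \<Longrightarrow> b < length ?p \<Longrightarrow> ?p!a < ?p!b"
    using lt by (auto simp: nth_append)
  have A: "\<And>a. a < ?m \<Longrightarrow> ?p!a = xs!a" by (simp add: nth_append)
  have B: "\<And>a. ?m \<le> a \<Longrightarrow> ?p!a = ys!(a - ?m)" by (simp add: nth_append)
  {
    assume "pat1 ?p"
    then obtain i j k l where h: "i<j" "j<k" "k<l" "l<length ?p" "?p!k < ?p!i" "?p!i < ?p!l" "?p!l < ?p!j"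
      unfolding pat1_def by blast
    show "pat1 xs \<or> pat1 ys"
    proof (cases "l < ?m")
      case True
      then have "pat1 xs" unfolding pat1_def using h A[of i] A[of j] A[of k] A[of l]
        by (rule_tac x=i in exI, rule_tac x=j in exI, rule_tac x=k in exI, rule_tac x=l in exI) auto
      then show ?thesis ..
    next
      case False
      show ?thesis
      proof (cases "?m \<le> i")
        case True
        then have "pat1 ys" unfolding pat1_def using h B[of i] B[of j] B[of k] B[of l]
          by (rule_tac x="i-?m" in exI, rule_tac x="j-?m" in exI, rule_tac x="k-?m" in exI, rule_tac x="l-?m" in exI) (auto; linarith)
        then show ?thesis ..
      next
        case F2: False
        show ?thesis
        proof (cases "j < ?m")
          case True
          then have "?p!j < ?p!l" using L[of j l] h False by auto
          then show ?thesis using h by auto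
        next
          case F3: False
          then have "?p!i < ?p!k" using L[of i k] h F2 by auto
          then show ?thesis using h by auto
        qed
      qed
    qed
  }
  {
    assume "pat2 ?p"
    then obtain i j k l where h: "i<j" "j<k" "k<l" "l<length ?p" "?p!j < ?p!l" "?p!l < ?p!i" "?p!i < ?p!k"
      unfolding pat2_def by blast
    show "pat2 xs \<or> pat2 ys"
    proof (cases "l < ?m")
      case True
      then have "pat2 xs" unfolding pat2_def using h A[of i] A[of j] A[of k] A[of l]
        by (rule_tac x=i in exI, rule_tac x=j in exI, rule_tac x=k in exI, rule_tac x=l in exI) auto
      then show ?thesis ..
    next
      case False
      show ?thesis
      proof (cases "?m \<le> i")
        case True
        then have "pat2 ys" unfolding pat2_def using h B[of i] B[of j] B[of k] B[of l]
          by (rule_tac x="i-?m" in exI, rule_tac x="j-?m" in exI, rule_tac x="k-?m" in exI, rule_tac x="l-?m" in exI) (auto; linarith)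
        then show ?thesis ..
      next
        case F2: False
        then have "?p!i < ?p!l" using L[of i l] h False by auto
        then show ?thesis using h by auto
      qed
    qed
  }
qed



definition splitP :: "nat list \<Rightarrow> nat \<Rightarrow> bool" where
  "splitP p k \<longleftrightarrow> 0<k \<and> k<length p \<and> (\<forall>a\<in>set(take k p). \<forall>b\<in>set(drop k p). a<b)"
definition splitM :: "nat list \<Rightarrow> nat \<Rightarrow> bool" where
  "splitM p k \<longleftrightarrow> 0<k \<and> k<length p \<and> (\<forall>a\<in>set(take k p). \<forall>b\<in>set(drop k p). b<a)"

lemma core_split:
  assumes d: "distinct (q @ [v])" and n1: "\<not> pat1 (q @ [v])" and n2: "\<not> pat2 (q @ [v])"
    and sp: "splitP q k"
  shows "(\<exists>k. splitP (q @ [v]) k) \<or> (\<exists>k. splitM (q @ [v]) k)"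
proof -
  let ?p = "q @ [v]"
  have k: "0 < k" "k < length q" and lt: "\<forall>a\<in>set(take k q). \<forall>b\<in>set(drop k q). a<b"
    using sp unfolding splitP_def by auto
  have vq: "v \<notin> set q" using d by auto
  show ?thesis
  proof (cases "\<forall>a\<in>set(take k q). a < v")
    case True
    have "splitP ?p k" unfolding splitP_def using k lt True by auto
    then show ?thesis by blast
  next
    case False
    then obtain a2 where a2: "a2 \<in> set (take k q)" "v < a2" using vq
      by (metis in_set_takeD linorder_neqE_nat)
    show ?thesis
    proof (cases "\<forall>x\<in>set q. v < x")
      case True
      have "splitM ?p (length q)" unfolding splitM_def using k True by auto
      then show ?thesis by blast
    next
      case False
      then obtain x where x: "x \<in> set q" "x < v" using vq by (metis linorder_neqE_nat)
      have vB: "\<forall>b\<in>set (drop k q). v < b" using lt a2 by fastforce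
      obtain ia where ia: "ia < k" "q!ia = a2" using a2 k
        by (metis in_set_conv_nth length_take min.absorb4 nth_take)
      define t where "t = (LEAST t. t < length q \<and> v < q!t)"
      have tex: "ia < length q \<and> v < q!ia" using ia a2 k by auto
      have t1: "t < length q \<and> v < q!t" unfolding t_def by (rule LeastI[of _ ia], rule tex)
      have t2: "t \<le> ia" unfolding t_def by (rule Least_le, rule tex)
      have below: "\<And>j. j < t \<Longrightarrow> q!j < v"
      proof -
        fix j assume "j < t"
        then have "\<not> (j < length q \<and> v < q!j)" unfolding t_def using not_less_Least by blast
        moreover have "j < length q" using \<open>j<t\<close> t1 by auto
        moreover have "q!j \<noteq> v" using vq \<open>j < length q\<close> nth_mem by force
        ultimately show "q!j < v" by auto
      qed
      have above: "\<And>j. t \<le> j \<Longrightarrow> j < length q \<Longrightarrow> v < q!j"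
      proof -
        fix j assume j: "t \<le> j" "j < length q"
        show "v < q!j"
        proof (cases "j < k")
          case True
          show ?thesis
          proof (rule ccontr)
            assume "\<not> v < q!j"
            moreover have "q!j \<noteq> v" using vq j nth_mem by force
            ultimately have qj: "q!j < v" by auto
            then have "j \<noteq> t" using t1 by auto
            then have tj: "t < j" using j by auto
            have "q!t \<in> set (take k q)" using t2 ia k by (auto simp: in_set_conv_nth intro!: exI[of _ t])
            moreover have "q!k \<in> set (drop k q)" using k by (auto simp: in_set_conv_nth intro!: exI[of _ 0])
            ultimately have "q!t < q!k" using lt by auto
            have "pat2 ?p" unfolding pat2_def
              apply (rule exI[of _ t], rule exI[of _ j], rule exI[of _ k], rule exI[of _ "length q"])
              using tj True k qj t1 \<open>q!t < q!k\<close> by (auto simp: nth_append)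
            then show False using n2 by simp
          qed
        next
          case False
          then have "q!j \<in> set (drop k q)" using j by (auto simp: in_set_conv_nth intro!: exI[of _ "j-k"])
          then show ?thesis using vB by auto
        qed
      qed
      obtain jx where jx: "jx < length q" "q!jx = x" using x by (auto simp: in_set_conv_nth)
      have "jx < t" using above[of jx] jx x by (meson not_le order.asym)
      then have t0: "0 < t" by auto
      have "splitP ?p t" unfolding splitP_def
      proof (intro conjI ballI)
        show "0 < t" by (rule t0)
        show "t < length ?p" using t1 by simp
        fix a b assume a: "a \<in> set (take t ?p)" and b: "b \<in> set (drop t ?p)"
        have "a < v" using a t1 below by (auto simp: in_set_conv_nth nth_append)
        moreover have "v \<le> b"
        proof -
          have "drop t ?p = drop t q @ [v]" using t1 by simp
          then have "b \<in> set (drop t q) \<or> b = v" using b by auto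
          moreover have "b \<in> set (drop t q) \<Longrightarrow> v < b"
          proof -
            assume "b \<in> set (drop t q)"
            then obtain i where "i < length q - t" "b = q!(t+i)" by (auto simp: in_set_conv_nth)
            then show "v < b" using above[of "t+i"] by auto
          qed
          ultimately show ?thesis by auto
        qed
        ultimately show "a < b" by simp
      qed
      then show ?thesis by blast
    qed
  qed
qed

lemma split_map_anti:
  assumes "\<forall>x\<in>set p. \<forall>y\<in>set p. (g x < g y \<longleftrightarrow> y < x)"
  shows "splitP (map g p) k \<longleftrightarrow> splitM p k" "splitM (map g p) k \<longleftrightarrow> splitP p k"
proof -
  have "\<forall>a\<in>set (take k p). \<forall>b\<in>set (drop k p). (g a < g b \<longleftrightarrow> b < a) \<and> (g b < g a \<longleftrightarrow> a < b)"
    using assms by (meson in_set_dropD in_set_takeD)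
  then show "splitP (map g p) k \<longleftrightarrow> splitM p k" "splitM (map g p) k \<longleftrightarrow> splitP p k"
    unfolding splitP_def splitM_def by (auto simp: take_map drop_map)
qed

lemma distinct_map_anti:
  fixes g :: "nat \<Rightarrow> nat"
  assumes "\<forall>x\<in>set p. \<forall>y\<in>set p. (g x < g y \<longleftrightarrow> y < x)" "distinct p"
  shows "distinct (map g p)"
proof -
  have "inj_on g (set p)" unfolding inj_on_def
  proof (intro ballI impI)
    fix x y assume "x \<in> set p" "y \<in> set p" "g x = g y"
    moreover have "x < y \<Longrightarrow> g y < g x" "y < x \<Longrightarrow> g x < g y"
      using assms(1) \<open>x \<in> set p\<close> \<open>y \<in> set p\<close> by blast+
    ultimately show "x = y" by (metis less_irrefl linorder_neqE_nat)
  qed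
  then show ?thesis using assms(2) by (simp add: distinct_map)
qed

theorem decomp:
  "distinct p \<Longrightarrow> \<not> pat1 p \<Longrightarrow> \<not> pat2 p \<Longrightarrow> 2 \<le> length p \<Longrightarrow>
     (\<exists>k. splitP p k) \<or> (\<exists>k. splitM p k)"
proof (induction p rule: rev_induct)
  case Nil
  then show ?case by simp
next
  case (snoc v q)
  show ?case
  proof (cases "length q < 2")
    case True
    then obtain u where q: "q = [u]" using snoc.prems(4)
      by (cases q) (auto simp: length_Suc_conv)
    then have "u \<noteq> v" using snoc.prems(1) by auto
    then show ?thesis unfolding q splitP_def splitM_def
      by (cases "u < v") (auto intro!: exI[of _ 1])
  next
    case False
    have tq: "take (length q) (q @ [v]) = q" by simp
    have "\<not> pat1 q" "\<not> pat2 q" using snoc.prems(2,3) pat_take[of "length q" "q@[v]"] tq by auto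
    moreover have "distinct q" using snoc.prems(1) by simp
    ultimately have IH: "(\<exists>k. splitP q k) \<or> (\<exists>k. splitM q k)" using snoc.IH False by simp
    then show ?thesis
    proof
      assume "\<exists>k. splitP q k"
      then show ?thesis using core_split snoc.prems by blast
    next
      assume "\<exists>k. splitM q k"
      then obtain k where k: "splitM q k" by blast
      define M where "M = Max (set (q @ [v]))"
      define g where "g = (\<lambda>x::nat. M - x)"
      have le: "\<forall>x\<in>set (q@[v]). x \<le> M" unfolding M_def by simp
      have anti: "\<forall>x\<in>set (q@[v]). \<forall>y\<in>set (q@[v]). (g x < g y \<longleftrightarrow> y < x)"
        using le unfolding g_def by auto
      have antiq: "\<forall>x\<in>set q. \<forall>y\<in>set q. (g x < g y \<longleftrightarrow> y < x)" using anti by auto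
      have "splitP (map g q) k" using split_map_anti(1)[OF antiq] k by simp
      moreover have "distinct (map g q @ [g v])"
        using distinct_map_anti[OF anti snoc.prems(1)] by simp
      moreover have "\<not> pat1 (map g q @ [g v])" "\<not> pat2 (map g q @ [g v])"
        using pat_map_anti[OF anti] snoc.prems(2,3) by auto
      ultimately have "(\<exists>k. splitP (map g (q @ [v])) k) \<or> (\<exists>k. splitM (map g (q @ [v])) k)"
        using core_split[of "map g q" "g v" k] by simp
      then show ?thesis using split_map_anti[OF anti] by blast
    qed
  qed
qed

lemma perms_iff: "p \<in> perms n \<longleftrightarrow> distinct p \<and> set p = {1..n}"
  unfolding perms_def permutations_of_set_def by auto

lemma perms_length: "p \<in> perms n \<Longrightarrow> length p = n"
  unfolding perms_iff by (metis card_atLeastAtMost diff_Suc_1 distinct_card)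

lemma finite_perms: "finite (perms n)"
  unfolding perms_def by simp

lemma finite_sep: "finite (sep_perms n)"
  unfolding sep_perms_def using finite_perms by simp

lemma sep_iff: "p \<in> sep_perms n \<longleftrightarrow> p \<in> perms n \<and> \<not> pat1 p \<and> \<not> pat2 p"
  unfolding sep_perms_alt by simp

lemma take_drop_sets:
  assumes "distinct p"
  shows "set (take k p) \<inter> set (drop k p) = {}" "set (take k p) \<union> set (drop k p) = set p"
  using assms apply (metis distinct_append append_take_drop_id)
  by (metis set_append append_take_drop_id)

lemma card_take_set: "distinct p \<Longrightarrow> k \<le> length p \<Longrightarrow> card (set (take k p)) = k"
  by (simp add: distinct_card)

lemma splitP_set:
  assumes p: "p \<in> perms n" and s: "splitP p k"
  shows "set (take k p) = {1..k}"
proof -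
  let ?S = "set (take k p)" and ?T = "set (drop k p)"
  have d: "distinct p" and sp: "set p = {1..n}" using p perms_iff by auto
  have len: "length p = n" using p perms_length by auto
  have k: "0<k" "k<n" and lt: "\<forall>a\<in>?S. \<forall>b\<in>?T. a<b" using s len unfolding splitP_def by auto
  have U: "?S \<union> ?T = {1..n}" using take_drop_sets(2)[OF d] sp by simp
  have cS: "card ?S = k" using card_take_set[OF d] k len by simp
  have sub: "?S \<subseteq> {1..k}"
  proof
    fix x assume x: "x \<in> ?S"
    have "{1..x} \<subseteq> ?S"
    proof
      fix y assume y: "y \<in> {1..x}"
      have "x \<in> {1..n}" using x U by auto
      then have "y \<in> ?S \<union> ?T" using y U by auto
      moreover have "y \<notin> ?T" using lt x y by fastforce
      ultimately show "y \<in> ?S" by auto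
    qed
    then have "card {1..x} \<le> card ?S" by (intro card_mono) auto
    then have "x \<le> k" using cS by simp
    moreover have "1 \<le> x" using x U by auto
    ultimately show "x \<in> {1..k}" by simp
  qed
  show ?thesis using card_subset_eq[OF _ sub] cS by simp
qed

lemma splitM_set:
  assumes p: "p \<in> perms n" and s: "splitM p k"
  shows "set (take k p) = {n-k+1..n}"
proof -
  let ?S = "set (take k p)" and ?T = "set (drop k p)"
  have d: "distinct p" and sp: "set p = {1..n}" using p perms_iff by auto
  have len: "length p = n" using p perms_length by auto
  have k: "0<k" "k<n" and lt: "\<forall>a\<in>?S. \<forall>b\<in>?T. b<a" using s len unfolding splitM_def by auto
  have U: "?S \<union> ?T = {1..n}" using take_drop_sets(2)[OF d] sp by simp
  have cS: "card ?S = k" using card_take_set[OF d] k len by simp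
  have sub: "?S \<subseteq> {n-k+1..n}"
  proof
    fix x assume x: "x \<in> ?S"
    have xn: "x \<in> {1..n}" using x U by auto
    have "{x..n} \<subseteq> ?S"
    proof
      fix y assume y: "y \<in> {x..n}"
      then have "y \<in> ?S \<union> ?T" using xn U by auto
      moreover have "y \<notin> ?T" using lt x y by fastforce
      ultimately show "y \<in> ?S" by auto
    qed
    then have "card {x..n} \<le> card ?S" by (intro card_mono) auto
    then have "n + 1 - x \<le> k" using cS by simp
    then show "x \<in> {n-k+1..n}" using xn by auto
  qed
  have "card {n-k+1..n} = k" using k by simp
  then show ?thesis using card_subset_eq[OF _ sub] cS by simp
qed

definition pd :: "nat list \<Rightarrow> bool" where
  "pd p \<longleftrightarrow> (\<exists>k. 0<k \<and> k<length p \<and> set (take k p) = {1..k})"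
definition md :: "nat list \<Rightarrow> bool" where
  "md p \<longleftrightarrow> (\<exists>k. 0<k \<and> k<length p \<and> set (take k p) = {length p - k + 1..length p})"

lemma sep_pd_md:
  assumes "p \<in> sep_perms n" "2 \<le> n"
  shows "pd p \<or> md p"
proof -
  have p: "p \<in> perms n" "\<not> pat1 p" "\<not> pat2 p" using assms sep_iff by auto
  have len: "length p = n" using p perms_length by auto
  have "distinct p" using p perms_iff by auto
  then have "(\<exists>k. splitP p k) \<or> (\<exists>k. splitM p k)" using decomp[of p] p(2,3) len assms(2) by simp
  then show ?thesis
  proof
    assume "\<exists>k. splitP p k"
    then obtain k where "splitP p k" by blast
    then have "0<k \<and> k<length p \<and> set (take k p) = {1..k}" using splitP_set[OF p(1)] unfolding splitP_def by simp
    then show ?thesis unfolding pd_def by blast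
  next
    assume "\<exists>k. splitM p k"
    then obtain k where "splitM p k" by blast
    then have "0<k \<and> k<length p \<and> set (take k p) = {length p-k+1..length p}" using splitM_set[OF p(1)] len unfolding splitM_def by simp
    then show ?thesis unfolding md_def by blast
  qed
qed

lemma not_pd_md: "\<not> (pd p \<and> md p)"
proof
  assume "pd p \<and> md p"
  then obtain k k' where k: "0<k" "k<length p" "set (take k p) = {1..k}"
    and k': "0<k'" "k'<length p" "set (take k' p) = {length p - k' + 1..length p}"
    unfolding pd_def md_def by blast
  show False
  proof (cases "k \<le> k'")
    case True
    have "set (take k p) \<subseteq> set (take k' p)" using True by (metis set_take_subset_set_take)
    then have "1 \<in> {length p - k' + 1..length p}" using k k' by auto
    then show False using k' by auto
  next
    case False
    have "set (take k' p) \<subseteq> set (take k p)" using False by (metis nat_le_linear set_take_subset_set_take)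
    then have "length p \<in> {1..k}" using k k' by auto
    then show False using k by auto
  qed
qed



definition cmpl :: "nat list \<Rightarrow> nat list" where
  "cmpl p = map (\<lambda>x. Suc (length p) - x) p"

definition du :: "nat list \<Rightarrow> bool" where
  "du p \<longleftrightarrow> (\<forall>i. Suc i < length p \<longrightarrow> (if even i then p ! i > p ! Suc i else p ! i < p ! Suc i))"

lemma length_cmpl[simp]: "length (cmpl p) = length p" by (simp add: cmpl_def)

lemma perm_le: "p \<in> perms n \<Longrightarrow> x \<in> set p \<Longrightarrow> 1 \<le> x \<and> x \<le> n"
  by (auto simp: perms_iff)

lemma cmpl_anti: "p \<in> perms n \<Longrightarrow> \<forall>x\<in>set p. \<forall>y\<in>set p. ((\<lambda>x. Suc n - x) x < (\<lambda>x. Suc n - x) y \<longleftrightarrow> y < x)"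
  using perm_le by fastforce

lemma image_flip: "b \<le> n \<Longrightarrow> (\<lambda>x. Suc n - x) ` {a..b} = {Suc n - b..Suc n - a}"
proof (intro set_eqI iffI)
  fix y assume "b \<le> n" "y \<in> {Suc n - b..Suc n - a}"
  then show "y \<in> (\<lambda>x. Suc n - x) ` {a..b}"
    by (cases "a \<le> b") (auto intro!: image_eqI[of _ _ "Suc n - y"])
qed auto

lemma cmpl_perm: assumes "p \<in> perms n" shows "cmpl p \<in> perms n"
proof -
  have len: "length p = n" using assms perms_length by auto
  have "distinct (cmpl p)" unfolding cmpl_def length_map len
    using distinct_map_anti[OF cmpl_anti[OF assms]] assms perms_iff by auto
  moreover have "set (cmpl p) = {1..n}" unfolding cmpl_def length_map len
    using assms image_flip[of n n 1] by (auto simp: perms_iff)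
  ultimately show ?thesis by (simp add: perms_iff)
qed

lemma cmpl_cmpl: assumes "p \<in> perms n" shows "cmpl (cmpl p) = p"
proof -
  have len: "length p = n" using assms perms_length by auto
  have "\<forall>x\<in>set p. x \<le> n" using perm_le[OF assms] by auto
  then show ?thesis unfolding cmpl_def by (auto simp: len intro!: map_idI)
qed

lemma cmpl_sep: assumes "p \<in> sep_perms n" shows "cmpl p \<in> sep_perms n"
proof -
  have p: "p \<in> perms n" using assms sep_iff by auto
  have len: "length p = n" using p perms_length by auto
  show ?thesis using assms cmpl_perm[OF p] pat_map_anti[OF cmpl_anti[OF p]]
    unfolding sep_iff cmpl_def length_map len by auto
qed

lemma take_cmpl: "take k (cmpl p) = map (\<lambda>x. Suc (length p) - x) (take k p)"
  by (simp add: cmpl_def take_map)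

lemma pd_cmpl: assumes p: "p \<in> perms n" and "pd p" shows "md (cmpl p)"
proof -
  have len: "length p = n" using p perms_length by auto
  obtain k where k: "0<k" "k<n" "set (take k p) = {1..k}" using assms(2) len unfolding pd_def by auto
  have "set (take k (cmpl p)) = {n-k+1..n}" unfolding take_cmpl len set_map k(3)
    using image_flip[of k n 1] k by auto
  then show ?thesis unfolding md_def using k len by auto
qed

lemma md_cmpl: assumes p: "p \<in> perms n" and "md p" shows "pd (cmpl p)"
proof -
  have len: "length p = n" using p perms_length by auto
  obtain k where k: "0<k" "k<n" "set (take k p) = {n-k+1..n}" using assms(2) len unfolding md_def by auto
  have "set (take k (cmpl p)) = {1..k}" unfolding take_cmpl len set_map k(3)
    using image_flip[of n n "n-k+1"] k by auto
  then show ?thesis unfolding pd_def using k len by auto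
qed

lemma pd_cmpl_iff: "p \<in> perms n \<Longrightarrow> pd (cmpl p) \<longleftrightarrow> md p"
  using md_cmpl pd_cmpl cmpl_perm cmpl_cmpl by metis

lemma md_cmpl_iff: "p \<in> perms n \<Longrightarrow> md (cmpl p) \<longleftrightarrow> pd p"
  using md_cmpl pd_cmpl cmpl_perm cmpl_cmpl by metis

definition D :: "nat list \<Rightarrow> nat set" where
  "D p = {i. Suc i < length p \<and> p!i > p!Suc i}"

lemma des_D: "des p = card (D p)" unfolding des_def D_def ..

lemma D_sub: "D p \<subseteq> {..<length p - 1}" unfolding D_def by auto

lemma des_cmpl: assumes p: "p \<in> perms n" shows "des (cmpl p) = n - 1 - des p"
proof -
  have len: "length p = n" using p perms_length by auto
  have d: "distinct p" using p perms_iff by auto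
  have "D (cmpl p) = {..<n - 1} - D p"
  proof (intro set_eqI iffI)
    fix i assume "i \<in> D (cmpl p)"
    then have i: "Suc i < n" "Suc n - p!i > Suc n - p!Suc i" unfolding D_def cmpl_def length_map len by (auto simp: len)
    then show "i \<in> {..<n - 1} - D p" unfolding D_def len by auto
  next
    fix i assume "i \<in> {..<n - 1} - D p"
    then have i: "Suc i < n" "\<not> p!i > p!Suc i" unfolding D_def len by auto
    have "p!i \<noteq> p!Suc i" using d i(1) len nth_eq_iff_index_eq by fastforce
    then have "p!i < p!Suc i" using i by auto
    moreover have "p!Suc i \<le> n" using perm_le[OF p, of "p!Suc i"] i(1) len by auto
    ultimately show "i \<in> D (cmpl p)" unfolding D_def cmpl_def length_map len using i by (auto simp: len)
  qed
  then show ?thesis unfolding des_D using D_sub[of p] len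
    by (simp add: card_Diff_subset finite_subset)
qed

lemma ud_cmpl: assumes p: "p \<in> perms n" shows "alternating (cmpl p) \<longleftrightarrow> du p"
proof -
  have len: "length p = n" using p perms_length by auto
  have le: "\<And>i. i < n \<Longrightarrow> 1 \<le> p!i \<and> p!i \<le> n" using perm_le[OF p] len nth_mem by metis
  have e: "\<And>i j. i < n \<Longrightarrow> j < n \<Longrightarrow> (Suc n - p!i < Suc n - p!j) \<longleftrightarrow> p!j < p!i"
    using le by fastforce
  have c: "\<And>i. i < n \<Longrightarrow> cmpl p ! i = Suc n - p!i" unfolding cmpl_def using len by simp
  have "\<And>i. Suc i < n \<Longrightarrow> ((if even i then cmpl p ! i < cmpl p ! Suc i else cmpl p ! i > cmpl p ! Suc i)
      \<longleftrightarrow> (if even i then p ! i > p ! Suc i else p ! i < p ! Suc i))"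
    using c e by simp
  then show ?thesis unfolding alternating_def du_def using len by simp
qed

lemma du_cmpl: assumes p: "p \<in> perms n" shows "du (cmpl p) \<longleftrightarrow> alternating p"
  using ud_cmpl[OF cmpl_perm[OF p]] cmpl_cmpl[OF p] by simp

lemma rev_perm: "p \<in> perms n \<Longrightarrow> rev p \<in> perms n" by (simp add: perms_iff)

lemma rev_sep: "p \<in> sep_perms n \<Longrightarrow> rev p \<in> sep_perms n"
  using rev_perm pat1_rev pat2_rev sep_iff by auto

lemma set_drop_perm:
  assumes p: "p \<in> perms n" shows "set (drop k p) = {1..n} - set (take k p)"
  using take_drop_sets[of p k] p by (auto simp: perms_iff)

lemma md_rev: assumes p: "p \<in> perms n" and "md p" shows "pd (rev p)"
proof -
  have len: "length p = n" using p perms_length by auto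
  obtain k where k: "0<k" "k<n" "set (take k p) = {n-k+1..n}" using assms(2) len unfolding md_def by auto
  have "set (take (n-k) (rev p)) = set (drop k p)" using len k by (simp add: take_rev)
  also have "\<dots> = {1..n-k}" unfolding set_drop_perm[OF p] k(3) by auto
  finally show ?thesis unfolding pd_def using k len by (intro exI[of _ "n-k"]) auto
qed

lemma pd_rev: assumes p: "p \<in> perms n" and "pd p" shows "md (rev p)"
proof -
  have len: "length p = n" using p perms_length by auto
  obtain k where k: "0<k" "k<n" "set (take k p) = {1..k}" using assms(2) len unfolding pd_def by auto
  have "set (take (n-k) (rev p)) = set (drop k p)" using len k by (simp add: take_rev)
  also have "\<dots> = {k+1..n}" unfolding set_drop_perm[OF p] k(3) by auto
  finally show ?thesis unfolding md_def using k len by (intro exI[of _ "n-k"]) auto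
qed

lemma ud_rev1: assumes "odd (length p)" "alternating p" shows "alternating (rev p)"
  unfolding alternating_def
proof (intro allI impI)
  fix i assume i: "Suc i < length (rev p)"
  let ?n = "length p"
  define j where "j = ?n - 2 - i"
  have j: "Suc j < ?n" "?n - 1 - i = Suc j" "?n - 1 - Suc i = j" using i unfolding j_def by auto
  have s: "i + j + 2 = ?n" using i unfolding j_def by simp
  have par: "even i \<longleftrightarrow> odd j" using assms(1) s by presburger
  have rv: "rev p ! i = p ! Suc j" "rev p ! Suc i = p ! j" using i j by (auto simp: rev_nth)
  show "if even i then rev p ! i < rev p ! Suc i else rev p ! Suc i < rev p ! i"
    using assms(2) j(1) par unfolding alternating_def rv by (auto split: if_splits)
qed

lemma ud_rev: "odd (length p) \<Longrightarrow> alternating (rev p) \<longleftrightarrow> alternating p"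
  using ud_rev1[of p] ud_rev1[of "rev p"] by auto



definition pls :: "nat \<Rightarrow> nat list \<Rightarrow> nat list \<Rightarrow> nat list" where
  "pls k a b = a @ map (\<lambda>x. x + k) b"

lemma plus_nth1: "length a = k \<Longrightarrow> i < k \<Longrightarrow> pls k a b ! i = a ! i"
  by (simp add: pls_def nth_append)

lemma plus_nth2: "length a = k \<Longrightarrow> k \<le> i \<Longrightarrow> i < k + length b \<Longrightarrow> pls k a b ! i = b ! (i - k) + k"
  by (simp add: pls_def nth_append)

lemma plus_length: "length (pls k a b) = length a + length b" by (simp add: pls_def)

lemma plus_perm:
  assumes a: "a \<in> perms k" and b: "b \<in> perms m"
  shows "pls k a b \<in> perms (k + m)"
proof -
  have "set (map (\<lambda>x. x + k) b) = {k+1..k+m}" using b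
    by (auto simp: perms_iff image_iff intro!: bexI[of _ "_ - k"])
  moreover have "distinct (map (\<lambda>x. x + k) b)" using b by (simp add: perms_iff distinct_map inj_on_def)
  ultimately show ?thesis using a b unfolding pls_def perms_iff by auto
qed

lemma pat_shift: "pat1 (map (\<lambda>x. x + k) b) \<longleftrightarrow> pat1 b" "pat2 (map (\<lambda>x. x + k) b) \<longleftrightarrow> pat2 b"
  by (rule pat_map_mono, simp)+

lemma plus_sep:
  assumes a: "a \<in> sep_perms k" and b: "b \<in> sep_perms m"
  shows "pls k a b \<in> sep_perms (k + m)"
proof -
  have ap: "a \<in> perms k" and bp: "b \<in> perms m" using a b sep_iff by auto
  have lt: "\<forall>x\<in>set a. \<forall>y\<in>set (map (\<lambda>x. x + k) b). x < y" using ap bp by (auto simp: perms_iff)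
  show ?thesis using plus_perm[OF ap bp] pat_app[OF lt] pat_shift a b unfolding sep_iff pls_def by blast
qed

lemma plus_pd:
  assumes a: "a \<in> perms k" and b: "b \<in> perms m" and "0 < k" "0 < m"
  shows "pd (pls k a b)"
proof -
  have "take k (pls k a b) = a" using a perms_length by (simp add: pls_def)
  then show ?thesis unfolding pd_def using assms plus_length perms_length a b
    by (intro exI[of _ k]) (auto simp: perms_iff)
qed

lemma D_plus:
  assumes a: "a \<in> perms k" and b: "b \<in> perms m" and "0 < k"
  shows "D (pls k a b) = D a \<union> (\<lambda>i. i + k) ` D b"
proof -
  have la: "length a = k" and lb: "length b = m" using a b perms_length by auto
  have av: "\<And>i. i < k \<Longrightarrow> a!i \<le> k" using perm_le[OF a] la nth_mem by metis
  have bv: "\<And>i. i < m \<Longrightarrow> 1 \<le> b!i" using perm_le[OF b] lb nth_mem by metis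
  show ?thesis
  proof (intro set_eqI iffI)
    fix i assume i: "i \<in> D (pls k a b)"
    then have i1: "Suc i < k + m" "pls k a b ! Suc i < pls k a b ! i" unfolding D_def plus_length la lb by auto
    show "i \<in> D a \<union> (\<lambda>i. i + k) ` D b"
    proof (cases "Suc i < k")
      case True
      then show ?thesis using i1 plus_nth1[OF la] unfolding D_def la by auto
    next
      case False
      show ?thesis
      proof (cases "i < k")
        case True
        then have "i = k - 1" using False by auto
        then have "pls k a b ! i \<le> k" "k < pls k a b ! Suc i"
          using plus_nth1[OF la, of i] plus_nth2[OF la, of "Suc i" b] av[of i] bv[of 0] False True i1 lb
          by auto
        then show ?thesis using i1 by auto
      next
        case F: False
        then have "i - k \<in> D b" using i1 plus_nth2[OF la, of i b] plus_nth2[OF la, of "Suc i" b] lb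
          unfolding D_def by (auto simp: Suc_diff_le)
        moreover have "i = (i - k) + k" using F by auto
        ultimately show ?thesis by blast
      qed
    qed
  next
    fix i assume "i \<in> D a \<union> (\<lambda>i. i + k) ` D b"
    then show "i \<in> D (pls k a b)"
    proof
      assume "i \<in> D a"
      then show ?thesis using plus_nth1[OF la] unfolding D_def plus_length la lb by auto
    next
      assume "i \<in> (\<lambda>i. i + k) ` D b"
      then obtain j where j: "j \<in> D b" "i = j + k" by auto
      then show ?thesis using plus_nth2[OF la, of i b] plus_nth2[OF la, of "Suc i" b] lb
        unfolding D_def plus_length la by auto
    qed
  qed
qed

lemma des_plus:
  assumes a: "a \<in> perms k" and b: "b \<in> perms m" and "0 < k"
  shows "des (pls k a b) = des a + des b"
proof -
  have la: "length a = k" using a perms_length by auto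
  have fin: "finite (D a)" "finite (D b)" using D_sub finite_subset by blast+
  have dis: "D a \<inter> (\<lambda>i. i + k) ` D b = {}" using D_sub[of a] la by auto
  have "card ((\<lambda>i. i + k) ` D b) = card (D b)" by (simp add: card_image inj_on_def)
  then show ?thesis unfolding des_D D_plus[OF assms] using card_Un_disjoint[OF fin(1) _ dis] fin by simp
qed

lemma plus_facts:
  assumes a: "a \<in> perms k" and b: "b \<in> perms m" and "0 < k" "0 < m"
  shows "\<And>i. Suc i < k \<Longrightarrow> pls k a b ! i = a ! i \<and> pls k a b ! Suc i = a ! Suc i"
    "pls k a b ! (k - 1) < pls k a b ! k"
    "\<And>j. Suc j < m \<Longrightarrow> pls k a b ! (k + j) = b ! j + k \<and> pls k a b ! Suc (k + j) = b ! Suc j + k"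
    "length (pls k a b) = k + m"
proof -
  have la: "length a = k" and lb: "length b = m" using a b perms_length by auto
  have av: "\<And>i. i < k \<Longrightarrow> a!i \<le> k" using perm_le[OF a] la nth_mem by metis
  have bv: "\<And>i. i < m \<Longrightarrow> 1 \<le> b!i" using perm_le[OF b] lb nth_mem by metis
  show "\<And>i. Suc i < k \<Longrightarrow> pls k a b ! i = a ! i \<and> pls k a b ! Suc i = a ! Suc i"
    using plus_nth1[OF la] by auto
  show "pls k a b ! (k - 1) < pls k a b ! k"
    using plus_nth1[OF la, of "k-1"] plus_nth2[OF la, of k b] av[of "k-1"] bv[of 0] assms lb by auto
  show "\<And>j. Suc j < m \<Longrightarrow> pls k a b ! (k + j) = b ! j + k \<and> pls k a b ! Suc (k + j) = b ! Suc j + k"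
    using plus_nth2[OF la] lb by auto
  show "length (pls k a b) = k + m" using plus_length la lb by simp
qed

lemma ud_plus:
  assumes a: "a \<in> perms k" and b: "b \<in> perms m" and k: "0 < k" and m: "0 < m"
  shows "alternating (pls k a b) \<longleftrightarrow> odd k \<and> alternating a \<and> du b"
proof -
  note F = plus_facts[OF assms]
  have la: "length a = k" and lb: "length b = m" using a b perms_length by auto
  let ?c = "pls k a b"
  show ?thesis
  proof
    assume A: "alternating ?c"
    have A': "\<And>i. Suc i < k + m \<Longrightarrow> (if even i then ?c ! i < ?c ! Suc i else ?c ! i > ?c ! Suc i)"
      using A F(4) unfolding alternating_def by simp
    have "even (k - 1)" using A'[of "k-1"] F(2) k m by (auto split: if_splits)
    then have ok: "odd k" using k by (cases k) auto
    have "alternating a" unfolding alternating_def la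
    proof (intro allI impI)
      fix i assume "Suc i < k"
      then show "if even i then a ! i < a ! Suc i else a ! Suc i < a ! i"
        using A'[of i] F(1)[of i] by (auto split: if_splits)
    qed
    moreover have "du b" unfolding du_def lb
    proof (intro allI impI)
      fix j assume j: "Suc j < m"
      have "even (k + j) \<longleftrightarrow> odd j" using ok by simp
      then show "if even j then b ! Suc j < b ! j else b ! j < b ! Suc j"
        using A'[of "k+j"] F(3)[OF j] j by (auto split: if_splits)
    qed
    ultimately show "odd k \<and> alternating a \<and> du b" using ok by simp
  next
    assume B: "odd k \<and> alternating a \<and> du b"
    show "alternating ?c" unfolding alternating_def F(4)
    proof (intro allI impI)
      fix i assume i: "Suc i < k + m"
      show "if even i then ?c ! i < ?c ! Suc i else ?c ! Suc i < ?c ! i"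
      proof (cases "Suc i < k")
        case True
        then show ?thesis using B F(1)[OF True] la unfolding alternating_def by simp
      next
        case False
        show ?thesis
        proof (cases "i < k")
          case True
          then have "i = k - 1" using False by auto
          moreover have "even (k - 1)" using B k by (cases k) auto
          ultimately show ?thesis using F(2) k by simp
        next
          case F2: False
          define j where "j = i - k"
          have ij: "i = k + j" "Suc j < m" using F2 i unfolding j_def by auto
          have "even (k + j) \<longleftrightarrow> odd j" using B by simp
          then show ?thesis using B F(3)[OF ij(2)] ij lb unfolding du_def by (auto split: if_splits)
        qed
      qed
    qed
  qed
qed

lemma du_plus:
  assumes a: "a \<in> perms k" and b: "b \<in> perms m" and k: "0 < k" and m: "0 < m"
  shows "du (pls k a b) \<longleftrightarrow> even k \<and> du a \<and> du b"
proof -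
  note F = plus_facts[OF assms]
  have la: "length a = k" and lb: "length b = m" using a b perms_length by auto
  let ?c = "pls k a b"
  show ?thesis
  proof
    assume A: "du ?c"
    have A': "\<And>i. Suc i < k + m \<Longrightarrow> (if even i then ?c ! i > ?c ! Suc i else ?c ! i < ?c ! Suc i)"
      using A F(4) unfolding du_def by simp
    have "odd (k - 1)" using A'[of "k-1"] F(2) k m by (auto split: if_splits)
    then have ok: "even k" using k by (cases k) auto
    have "du a" unfolding du_def la
    proof (intro allI impI)
      fix i assume "Suc i < k"
      then show "if even i then a ! Suc i < a ! i else a ! i < a ! Suc i"
        using A'[of i] F(1)[of i] by (auto split: if_splits)
    qed
    moreover have "du b" unfolding du_def lb
    proof (intro allI impI)
      fix j assume j: "Suc j < m"
      have "even (k + j) \<longleftrightarrow> even j" using ok by simp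
      then show "if even j then b ! Suc j < b ! j else b ! j < b ! Suc j"
        using A'[of "k+j"] F(3)[OF j] j by (auto split: if_splits)
    qed
    ultimately show "even k \<and> du a \<and> du b" using ok by simp
  next
    assume B: "even k \<and> du a \<and> du b"
    show "du ?c" unfolding du_def F(4)
    proof (intro allI impI)
      fix i assume i: "Suc i < k + m"
      show "if even i then ?c ! Suc i < ?c ! i else ?c ! i < ?c ! Suc i"
      proof (cases "Suc i < k")
        case True
        then show ?thesis using B F(1)[OF True] la unfolding du_def by simp
      next
        case False
        show ?thesis
        proof (cases "i < k")
          case True
          then have "i = k - 1" using False by auto
          moreover have "odd (k - 1)" using B k by (cases k) auto
          ultimately show ?thesis using F(2) k by simp
        next
          case F2: False
          define j where "j = i - k"
          have ij: "i = k + j" "Suc j < m" using F2 i unfolding j_def by auto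
          have "even (k + j) \<longleftrightarrow> even j" using B by simp
          then show ?thesis using B F(3)[OF ij(2)] ij lb unfolding du_def by (auto split: if_splits)
        qed
      qed
    qed
  qed
qed



definition fk :: "nat list \<Rightarrow> nat" where
  "fk p = (LEAST k. 0<k \<and> k<length p \<and> set (take k p) = {1..k})"

lemma take_pls: "length a = k \<Longrightarrow> take k (pls k a b) = a" by (simp add: pls_def)
lemma drop_pls: "length a = k \<Longrightarrow> drop k (pls k a b) = map (\<lambda>x. x + k) b" by (simp add: pls_def)

lemma fk_pls:
  assumes a: "a \<in> perms k" and b: "b \<in> perms m" and "0 < k" "0 < m" and npd: "\<not> pd a"
  shows "fk (pls k a b) = k"
  unfolding fk_def
proof (rule Least_equality)
  have la: "length a = k" using a perms_length by auto
  show "0 < k \<and> k < length (pls k a b) \<and> set (take k (pls k a b)) = {1..k}"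
    using assms la take_pls[OF la] plus_facts(4)[OF assms(1-4)] by (auto simp: perms_iff)
  fix y assume y: "0 < y \<and> y < length (pls k a b) \<and> set (take y (pls k a b)) = {1..y}"
  show "k \<le> y"
  proof (rule ccontr)
    assume "\<not> k \<le> y"
    then have "take y (pls k a b) = take y a" using la by (simp add: pls_def)
    then have "pd a" unfolding pd_def using y la \<open>\<not> k \<le> y\<close> by (intro exI[of _ y]) auto
    then show False using npd by simp
  qed
qed

lemma sum_pd:
  fixes w :: "nat list \<Rightarrow> int"
  shows "(\<Sum>p\<in>{p\<in>sep_perms n. pd p}. w p) =
    (\<Sum>k\<in>{1..<n}. \<Sum>a\<in>{a\<in>sep_perms k. \<not> pd a}. \<Sum>b\<in>sep_perms (n-k). w (pls k a b))"
proof -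
  let ?S = "{p\<in>sep_perms n. pd p}"
  let ?T = "SIGMA k:{1..<n}. SIGMA a:{a\<in>sep_perms k. \<not> pd a}. sep_perms (n-k)"
  have "(\<Sum>k\<in>{1..<n}. \<Sum>a\<in>{a\<in>sep_perms k. \<not> pd a}. \<Sum>b\<in>sep_perms (n-k). w (pls k a b))
      = (\<Sum>k\<in>{1..<n}. \<Sum>(a,b)\<in>(SIGMA a:{a\<in>sep_perms k. \<not> pd a}. sep_perms (n-k)). w (pls k a b))"
    by (intro sum.cong refl sum.Sigma) (auto simp: finite_sep)
  also have "\<dots> = (\<Sum>(k,a,b)\<in>?T. w (pls k a b))"
    by (subst sum.Sigma) (auto simp: finite_sep intro!: finite_SigmaI)
  also have "\<dots> = (\<Sum>p\<in>?S. w p)"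
  proof (rule sum.reindex_bij_witness[where i = "\<lambda>p. (fk p, take (fk p) p, map (\<lambda>x. x - fk p) (drop (fk p) p))"
        and j = "\<lambda>(k,a,b). pls k a b"])
    fix t assume t: "t \<in> ?T"
    then obtain k a b where tk: "t = (k,a,b)" "k \<in> {1..<n}" "a \<in> sep_perms k" "\<not> pd a" "b \<in> sep_perms (n-k)"
      by auto
    have ap: "a \<in> perms k" and bp: "b \<in> perms (n-k)" using tk sep_iff by auto
    have la: "length a = k" using ap perms_length by auto
    have k: "0 < k" "0 < n - k" using tk by auto
    have f: "fk (pls k a b) = k" using fk_pls[OF ap bp k tk(4)] .
    have "map (\<lambda>x. x - k) (map (\<lambda>x. x + k) b) = b" by (induct b) auto
    then show "(fk ((\<lambda>(k,a,b). pls k a b) t), take (fk ((\<lambda>(k,a,b). pls k a b) t)) ((\<lambda>(k,a,b). pls k a b) t),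
        map (\<lambda>x. x - fk ((\<lambda>(k,a,b). pls k a b) t)) (drop (fk ((\<lambda>(k,a,b). pls k a b) t)) ((\<lambda>(k,a,b). pls k a b) t))) = t"
      using tk f take_pls[OF la] drop_pls[OF la] by simp
    have "pls k a b \<in> sep_perms n" using plus_sep[OF tk(3,5)] tk by simp
    moreover have "pd (pls k a b)" using plus_pd[OF ap bp k] .
    ultimately show "(\<lambda>(k,a,b). pls k a b) t \<in> ?S" using tk by simp
  next
    fix p assume p: "p \<in> ?S"
    have ps: "p \<in> sep_perms n" and pdp: "pd p" using p by auto
    have pp: "p \<in> perms n" using ps sep_iff by auto
    have len: "length p = n" using pp perms_length by auto
    have d: "distinct p" and sp: "set p = {1..n}" using pp perms_iff by auto
    define k where "k = fk p"
    obtain k0 where k0: "0<k0 \<and> k0<length p \<and> set (take k0 p) = {1..k0}" using pdp unfolding pd_def by blast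
    have kp: "0<k \<and> k<length p \<and> set (take k p) = {1..k}" unfolding k_def fk_def by (rule LeastI[of _ k0], rule k0)
    define a where "a = take k p"
    define b where "b = map (\<lambda>x. x - k) (drop k p)"
    have sd: "set (drop k p) = {k+1..n}" using set_drop_perm[OF pp, of k] kp by auto
    have ap: "a \<in> perms k" unfolding a_def perms_iff using kp d by auto
    have bk: "map (\<lambda>x. x + k) b = drop k p" unfolding b_def using sd by (auto intro!: map_idI)
    have bp: "b \<in> perms (n-k)"
    proof -
      have "distinct (map (\<lambda>x. x + k) b)" unfolding bk using d by simp
      then have "distinct b" by (simp add: distinct_map)
      moreover have "set b = {1..n-k}" unfolding b_def set_map sd
        by (auto simp: image_iff intro!: bexI[of _ "_ + k"])
      ultimately show ?thesis by (simp add: perms_iff)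
    qed
    have np: "\<not> pat1 p" "\<not> pat2 p" using ps sep_iff by auto
    have npa: "\<not> pat1 a" "\<not> pat2 a" unfolding a_def using np pat_take(1)[of k p] pat_take(2)[of k p] by auto
    have "\<not> pat1 (drop k p)" "\<not> pat2 (drop k p)" using np pat_drop(1)[of k p] pat_drop(2)[of k p] by auto
    then have npb: "\<not> pat1 b" "\<not> pat2 b" using pat_shift[of k b] unfolding bk by auto
    have "\<not> pd a"
    proof
      assume "pd a"
      then obtain y where y: "0<y" "y<k" "set (take y a) = {1..y}" using ap perms_length unfolding pd_def by auto
      have "take y a = take y p" unfolding a_def using y by simp
      then have "k \<le> y" unfolding k_def fk_def using y kp by (intro Least_le) auto
      then show False using y by simp
    qed
    then have "(k, a, b) \<in> ?T"
      using ap bp npa npb kp len by (auto simp: sep_iff)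
    then show "(fk p, take (fk p) p, map (\<lambda>x. x - fk p) (drop (fk p) p)) \<in> ?T"
      unfolding k_def a_def b_def .
    have "pls k a b = p" unfolding pls_def bk a_def by simp
    then show "(\<lambda>(k,a,b). pls k a b) (fk p, take (fk p) p, map (\<lambda>x. x - fk p) (drop (fk p) p)) = p"
      unfolding k_def a_def b_def by simp
  qed (auto split: prod.splits)
  finally show ?thesis by simp
qed



lemma sum_invol:
  fixes f :: "nat list \<Rightarrow> int"
  assumes h: "\<And>p. p \<in> sep_perms n \<Longrightarrow> h p \<in> sep_perms n \<and> h (h p) = p"
  shows "(\<Sum>p\<in>{p\<in>sep_perms n. P p}. f p) = (\<Sum>q\<in>{q\<in>sep_perms n. P (h q)}. f (h q))"
  by (rule sum.reindex_bij_witness[where i = h and j = h]) (auto simp: h)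

lemma cmpl_invol: "p \<in> sep_perms n \<Longrightarrow> cmpl p \<in> sep_perms n \<and> cmpl (cmpl p) = p"
  using cmpl_sep cmpl_cmpl sep_iff by auto

lemma rev_invol: "p \<in> sep_perms n \<Longrightarrow> rev p \<in> sep_perms n \<and> rev (rev p) = p"
  using rev_sep by auto

definition FF :: "nat \<Rightarrow> int" where "FF n = (\<Sum>p\<in>sep_perms n. (-1) ^ des p)"
definition GG :: "nat \<Rightarrow> int" where "GG n = (\<Sum>p\<in>{p\<in>sep_perms n. pd p}. (-1) ^ des p)"
definition AA :: "nat \<Rightarrow> int" where "AA n = (\<Sum>p\<in>sep_perms n. if alternating p then 1 else 0)"
definition DD :: "nat \<Rightarrow> int" where "DD n = (\<Sum>p\<in>sep_perms n. if du p then 1 else 0)"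
definition PP :: "nat \<Rightarrow> int" where "PP n = (\<Sum>p\<in>{p\<in>sep_perms n. pd p}. if alternating p then 1 else 0)"
definition QQ :: "nat \<Rightarrow> int" where "QQ n = (\<Sum>p\<in>{p\<in>sep_perms n. pd p}. if du p then 1 else 0)"

lemma sum_npd:
  fixes f :: "nat list \<Rightarrow> int"
  shows "(\<Sum>a\<in>{a\<in>sep_perms k. \<not> pd a}. f a) = (\<Sum>a\<in>sep_perms k. f a) - (\<Sum>a\<in>{a\<in>sep_perms k. pd a}. f a)"
proof -
  let ?A = "{a\<in>sep_perms k. \<not> pd a}" and ?B = "{a\<in>sep_perms k. pd a}"
  have e: "sep_perms k = ?A \<union> ?B" by auto
  have fa: "finite ?A" "finite ?B" using finite_sep by auto
  have "?A \<inter> ?B = {}" by auto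
  then have "(\<Sum>a\<in>?A \<union> ?B. f a) = (\<Sum>a\<in>?A. f a) + (\<Sum>a\<in>?B. f a)"
    by (rule sum.union_disjoint[OF fa])
  then show ?thesis using e by simp
qed

lemma R2: "GG n = (\<Sum>k\<in>{1..<n}. (FF k - GG k) * FF (n - k))"
proof -
  have "GG n = (\<Sum>k\<in>{1..<n}. \<Sum>a\<in>{a\<in>sep_perms k. \<not> pd a}. \<Sum>b\<in>sep_perms (n-k). (-1) ^ des (pls k a b))"
    unfolding GG_def by (rule sum_pd)
  also have "\<dots> = (\<Sum>k\<in>{1..<n}. \<Sum>a\<in>{a\<in>sep_perms k. \<not> pd a}. \<Sum>b\<in>sep_perms (n-k). (-1) ^ des a * (-1) ^ des b)"
  proof (intro sum.cong refl)
    fix k a b assume "k \<in> {1..<n}" "a \<in> {a\<in>sep_perms k. \<not> pd a}" "b \<in> sep_perms (n-k)"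
    then have "des (pls k a b) = des a + des b" using des_plus[of a k b "n-k"] sep_iff by auto
    then show "(-1::int) ^ des (pls k a b) = (-1) ^ des a * (-1) ^ des b" by (simp add: power_add)
  qed
  also have "\<dots> = (\<Sum>k\<in>{1..<n}. (FF k - GG k) * FF (n - k))"
    unfolding FF_def GG_def sum_npd[symmetric] by (simp add: sum_product)
  finally show ?thesis .
qed

lemma R5: "PP n = (\<Sum>k\<in>{1..<n}. if odd k then (AA k - PP k) * DD (n - k) else 0)"
proof -
  have "PP n = (\<Sum>k\<in>{1..<n}. \<Sum>a\<in>{a\<in>sep_perms k. \<not> pd a}. \<Sum>b\<in>sep_perms (n-k). if alternating (pls k a b) then 1 else 0)"
    unfolding PP_def by (rule sum_pd)
  also have "\<dots> = (\<Sum>k\<in>{1..<n}. \<Sum>a\<in>{a\<in>sep_perms k. \<not> pd a}. \<Sum>b\<in>sep_perms (n-k).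
      (if odd k then 1 else 0) * ((if alternating a then 1 else 0) * (if du b then 1 else 0)))"
  proof (intro sum.cong refl)
    fix k a b assume "k \<in> {1..<n}" "a \<in> {a\<in>sep_perms k. \<not> pd a}" "b \<in> sep_perms (n-k)"
    then have "alternating (pls k a b) \<longleftrightarrow> odd k \<and> alternating a \<and> du b" using ud_plus[of a k b "n-k"] sep_iff by auto
    then show "(if alternating (pls k a b) then 1 else 0) = (if odd k then 1 else 0) * ((if alternating a then 1 else 0) * (if du b then (1::int) else 0))"
      by simp
  qed
  also have "\<dots> = (\<Sum>k\<in>{1..<n}. if odd k then (AA k - PP k) * DD (n - k) else 0)"
    unfolding AA_def PP_def DD_def sum_npd[symmetric] by (intro sum.cong refl) (simp add: sum_product)
  finally show ?thesis .
qed

lemma R6: "QQ n = (\<Sum>k\<in>{1..<n}. if even k then (DD k - QQ k) * DD (n - k) else 0)"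
proof -
  have "QQ n = (\<Sum>k\<in>{1..<n}. \<Sum>a\<in>{a\<in>sep_perms k. \<not> pd a}. \<Sum>b\<in>sep_perms (n-k). if du (pls k a b) then 1 else 0)"
    unfolding QQ_def by (rule sum_pd)
  also have "\<dots> = (\<Sum>k\<in>{1..<n}. \<Sum>a\<in>{a\<in>sep_perms k. \<not> pd a}. \<Sum>b\<in>sep_perms (n-k).
      (if even k then 1 else 0) * ((if du a then 1 else 0) * (if du b then 1 else 0)))"
  proof (intro sum.cong refl)
    fix k a b assume "k \<in> {1..<n}" "a \<in> {a\<in>sep_perms k. \<not> pd a}" "b \<in> sep_perms (n-k)"
    then have "du (pls k a b) \<longleftrightarrow> even k \<and> du a \<and> du b" using du_plus[of a k b "n-k"] sep_iff by auto
    then show "(if du (pls k a b) then 1 else 0) = (if even k then 1 else 0) * ((if du a then 1 else 0) * (if du b then (1::int) else 0))"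
      by simp
  qed
  also have "\<dots> = (\<Sum>k\<in>{1..<n}. if even k then (DD k - QQ k) * DD (n - k) else 0)"
    unfolding DD_def QQ_def sum_npd[symmetric] by (intro sum.cong refl) (simp add: sum_product)
  finally show ?thesis .
qed

lemma sep_one: "sep_perms (Suc 0) = {[Suc 0]}"
proof -
  have "{1..Suc 0} = {Suc 0}" by auto
  then have "perms (Suc 0) = {[Suc 0]}" unfolding perms_def by (simp only: permutations_of_set_singleton)
  moreover have "\<not> pat1 [Suc 0]" "\<not> pat2 [Suc 0]" unfolding pat1_def pat2_def by auto
  ultimately show ?thesis unfolding sep_perms_alt by auto
qed

lemma pd_one: "{p\<in>sep_perms (Suc 0). pd p} = {}"
proof -
  have "\<not> pd [Suc 0]" unfolding pd_def by auto
  then show ?thesis unfolding sep_one by auto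
qed

lemma md_sum:
  fixes f :: "nat list \<Rightarrow> int"
  shows "(\<Sum>p\<in>{p\<in>sep_perms n. md p}. f p) = (\<Sum>q\<in>{q\<in>sep_perms n. pd q}. f (cmpl q))"
proof -
  have "(\<Sum>p\<in>{p\<in>sep_perms n. md p}. f p) = (\<Sum>q\<in>{q\<in>sep_perms n. md (cmpl q)}. f (cmpl q))"
    by (rule sum_invol[OF cmpl_invol])
  also have "{q\<in>sep_perms n. md (cmpl q)} = {q\<in>sep_perms n. pd q}"
    using md_cmpl_iff sep_iff by blast
  finally show ?thesis .
qed

lemma split_sum:
  fixes f :: "nat list \<Rightarrow> int"
  assumes "2 \<le> n"
  shows "(\<Sum>p\<in>sep_perms n. f p) = (\<Sum>p\<in>{p\<in>sep_perms n. pd p}. f p) + (\<Sum>p\<in>{p\<in>sep_perms n. md p}. f p)"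
proof -
  let ?A = "{p\<in>sep_perms n. pd p}" and ?B = "{p\<in>sep_perms n. md p}"
  have e: "sep_perms n = ?A \<union> ?B" using sep_pd_md assms by auto
  have fa: "finite ?A" "finite ?B" using finite_sep by auto
  have "?A \<inter> ?B = {}" using not_pd_md by auto
  then have "(\<Sum>a\<in>?A \<union> ?B. f a) = (\<Sum>a\<in>?A. f a) + (\<Sum>a\<in>?B. f a)"
    by (rule sum.union_disjoint[OF fa])
  then show ?thesis using e by simp
qed

lemma pow_diff: "d \<le> m \<Longrightarrow> (-1::int) ^ (m - d) = (-1) ^ m * (-1) ^ d"
proof -
  assume "d \<le> m"
  then have "(-1::int) ^ m = (-1) ^ (m - d) * (-1) ^ d" by (metis le_add_diff_inverse2 power_add)
  then have "(-1::int) ^ m * (-1) ^ d = (-1) ^ (m - d) * ((-1) ^ d * (-1) ^ d)" by simp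
  also have "(-1::int) ^ d * (-1) ^ d = 1" by (simp add: power_add[symmetric] flip: mult_2)
  finally show ?thesis by simp
qed

lemma des_le: "des p \<le> length p - 1"
  unfolding des_D using card_mono[OF _ D_sub[of p]] by simp

lemma R1: "2 \<le> n \<Longrightarrow> FF n = GG n + (-1) ^ (n - 1) * GG n"
proof -
  assume n: "2 \<le> n"
  have "FF n = GG n + (\<Sum>p\<in>{p\<in>sep_perms n. md p}. (-1) ^ des p)"
    unfolding FF_def GG_def by (rule split_sum[OF n])
  also have "(\<Sum>p\<in>{p\<in>sep_perms n. md p}. (-1::int) ^ des p) = (\<Sum>q\<in>{q\<in>sep_perms n. pd q}. (-1) ^ des (cmpl q))"
    by (rule md_sum)
  also have "\<dots> = (\<Sum>q\<in>{q\<in>sep_perms n. pd q}. (-1) ^ (n - 1) * (-1) ^ des q)"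
  proof (intro sum.cong refl)
    fix q assume "q \<in> {q\<in>sep_perms n. pd q}"
    then have qp: "q \<in> perms n" using sep_iff by auto
    have "des q \<le> n - 1" using des_le[of q] perms_length[OF qp] by simp
    then show "(-1::int) ^ des (cmpl q) = (-1) ^ (n - 1) * (-1) ^ des q"
      using des_cmpl[OF qp] pow_diff[of "des q" "n - 1"] by (simp add: diff_diff_add)
  qed
  also have "\<dots> = (-1) ^ (n - 1) * GG n" unfolding GG_def by (simp add: sum_distrib_left)
  finally show ?thesis .
qed

lemma R3: "2 \<le> n \<Longrightarrow> AA n = PP n + QQ n"
proof -
  assume n: "2 \<le> n"
  have "AA n = PP n + (\<Sum>p\<in>{p\<in>sep_perms n. md p}. if alternating p then 1 else 0)"
    unfolding AA_def PP_def by (rule split_sum[OF n])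
  also have "(\<Sum>p\<in>{p\<in>sep_perms n. md p}. if alternating p then 1 else 0) = (\<Sum>q\<in>{q\<in>sep_perms n. pd q}. if alternating (cmpl q) then (1::int) else 0)"
    by (rule md_sum)
  also have "\<dots> = QQ n" unfolding QQ_def
    by (intro sum.cong refl) (use ud_cmpl sep_iff in auto)
  finally show ?thesis .
qed

lemma R4: "DD n = AA n"
proof -
  have "DD n = (\<Sum>p\<in>{p\<in>sep_perms n. True}. if du p then 1 else 0)" unfolding DD_def by simp
  also have "\<dots> = (\<Sum>q\<in>{q\<in>sep_perms n. True}. if du (cmpl q) then 1 else 0)"
    by (rule sum_invol[OF cmpl_invol])
  also have "\<dots> = AA n" unfolding AA_def
    by (intro sum.cong) (use du_cmpl sep_iff in auto)
  finally show ?thesis .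
qed

lemma R7: "odd n \<Longrightarrow> PP n = QQ n"
proof -
  assume n: "odd n"
  have "PP n = (\<Sum>q\<in>{q\<in>sep_perms n. pd (rev q)}. if alternating (rev q) then 1 else 0)"
    unfolding PP_def by (rule sum_invol[OF rev_invol])
  also have "{q\<in>sep_perms n. pd (rev q)} = {q\<in>sep_perms n. md q}"
  proof (intro set_eqI iffI)
    fix q assume "q \<in> {q\<in>sep_perms n. pd (rev q)}"
    then have "q \<in> sep_perms n" "md (rev (rev q))" using pd_rev[of "rev q" n] rev_perm sep_iff by auto
    then show "q \<in> {q\<in>sep_perms n. md q}" by simp
  next
    fix q assume "q \<in> {q\<in>sep_perms n. md q}"
    then show "q \<in> {q\<in>sep_perms n. pd (rev q)}" using md_rev[of q n] sep_iff by auto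
  qed
  also have "(\<Sum>q\<in>{q\<in>sep_perms n. md q}. if alternating (rev q) then 1 else 0) =
      (\<Sum>q\<in>{q\<in>sep_perms n. md q}. if alternating q then (1::int) else 0)"
    by (intro sum.cong refl) (use ud_rev n perms_length sep_iff in auto)
  also have "\<dots> = (\<Sum>q\<in>{q\<in>sep_perms n. pd q}. if alternating (cmpl q) then (1::int) else 0)"
    by (rule md_sum)
  also have "\<dots> = QQ n" unfolding QQ_def
    by (intro sum.cong refl) (use ud_cmpl sep_iff in auto)
  finally show ?thesis .
qed



definition sg :: "nat \<Rightarrow> int" where "sg n = (-1) ^ (n div 2)"

lemma sgn1: assumes "odd k" "odd (n - k)" "k < n" shows "sg k * sg (n - k) = - sg n"
proof -
  obtain a where a: "k = 2*a+1" using assms(1) oddE by blast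
  obtain b where b: "n - k = 2*b+1" using assms(2) oddE by blast
  have "n div 2 = a + b + 1" using a b assms(3) by presburger
  moreover have "k div 2 = a" "(n - k) div 2 = b" using a b by presburger+
  ultimately show ?thesis unfolding sg_def by (simp add: power_add)
qed

lemma sgn2: assumes "even k" "odd (n - k)" "k < n" shows "sg k * sg (n - k) = sg n"
proof -
  obtain a where a: "k = 2*a" using assms(1) by blast
  obtain b where b: "n - k = 2*b+1" using assms(2) oddE by blast
  have "n div 2 = a + b" using a b assms(3) by presburger
  moreover have "k div 2 = a" "(n - k) div 2 = b" using a b by presburger+
  ultimately show ?thesis unfolding sg_def by (simp add: power_add)
qed

lemma base1: "FF 1 = 1" "GG 1 = 0" "AA 1 = 1" "PP 1 = 0"
proof -
  have d: "des [Suc 0] = 0" unfolding des_def by simp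
  show "FF 1 = 1" unfolding FF_def using sep_one d by simp
  have e: "{p\<in>sep_perms 1. pd p} = {}" using pd_one by simp
  show "GG 1 = 0" unfolding GG_def e by simp
  show "AA 1 = 1" unfolding AA_def using sep_one by (simp add: alternating_def)
  show "PP 1 = 0" unfolding PP_def e by simp
qed

lemma main:
  "1 \<le> n \<Longrightarrow> FF n = (if even n then 0 else sg n * AA n) \<and> GG n = (if even n then - sg n else sg n) * PP n"
proof (induction n rule: less_induct)
  case (less n)
  show ?case
  proof (cases "n = 1")
    case True
    then show ?thesis using base1 by (simp add: sg_def)
  next
    case False
    then have n2: "2 \<le> n" using less.prems by simp
    have IH: "\<And>k. 1 \<le> k \<Longrightarrow> k < n \<Longrightarrow> FF k = (if even k then 0 else sg k * AA k) \<and> GG k = (if even k then - sg k else sg k) * PP k"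
      using less.IH by blast
    have R2n: "GG n = (\<Sum>k\<in>{1..<n}. (FF k - GG k) * FF (n - k))" by (rule R2)
    show ?thesis
    proof (cases "even n")
      case True
      have "GG n = (\<Sum>k\<in>{1..<n}. - sg n * (if odd k then (AA k - PP k) * AA (n - k) else 0))"
        unfolding R2n
      proof (intro sum.cong refl)
        fix k assume k: "k \<in> {1..<n}"
        show "(FF k - GG k) * FF (n - k) = - sg n * (if odd k then (AA k - PP k) * AA (n - k) else 0)"
        proof (cases "odd k")
          case True
          have o: "odd (n - k)" using True \<open>even n\<close> k by simp
          have "FF k = sg k * AA k" "GG k = sg k * PP k" "FF (n - k) = sg (n - k) * AA (n - k)"
            using IH[of k] IH[of "n-k"] k True o by auto
          moreover have "sg k * sg (n - k) = - sg n" using sgn1[OF True o] k by simp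
          ultimately show ?thesis using True
            by (simp add: algebra_simps)
        next
          case False
          have "even (n - k)" using False \<open>even n\<close> k by simp
          then have "FF (n - k) = 0" using IH[of "n-k"] k by auto
          then show ?thesis using False by simp
        qed
      qed
      also have "\<dots> = - sg n * PP n" unfolding R5[of n] R4 by (simp add: sum_distrib_left)
      finally have G: "GG n = - sg n * PP n" .
      have "FF n = GG n + (-1) ^ (n - 1) * GG n" using R1[OF n2] .
      moreover have "(-1::int) ^ (n - 1) = -1" using True n2 by (simp add: power_minus1_odd)
      ultimately have "FF n = 0" by simp
      then show ?thesis using G True by simp
    next
      case False
      have "GG n = (\<Sum>k\<in>{1..<n}. sg n * (if even k then PP k * AA (n - k) else 0))"
        unfolding R2n
      proof (intro sum.cong refl)
        fix k assume k: "k \<in> {1..<n}"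
        show "(FF k - GG k) * FF (n - k) = sg n * (if even k then PP k * AA (n - k) else 0)"
        proof (cases "even k")
          case True
          have o: "odd (n - k)" using True \<open>odd n\<close> k by simp
          have "FF k = 0" "GG k = - sg k * PP k" "FF (n - k) = sg (n - k) * AA (n - k)"
            using IH[of k] IH[of "n-k"] k True o by auto
          moreover have "sg k * sg (n - k) = sg n" using sgn2[OF True o] k by simp
          ultimately show ?thesis using True
            by (simp add: algebra_simps)
        next
          case F: False
          have "even (n - k)" using F \<open>odd n\<close> k by simp
          then have "FF (n - k) = 0" using IH[of "n-k"] k by auto
          then show ?thesis using F by simp
        qed
      qed
      also have "\<dots> = sg n * QQ n"
      proof -
        have "QQ n = (\<Sum>k\<in>{1..<n}. if even k then PP k * AA (n - k) else 0)"
          unfolding R6[of n] R4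
        proof (intro sum.cong refl)
          fix k assume k: "k \<in> {1..<n}"
          show "(if even k then (AA k - QQ k) * AA (n - k) else 0) = (if even k then PP k * AA (n - k) else 0)"
          proof (cases "even k")
            case True
            moreover have "1 \<le> k" using k by simp
            ultimately have "2 \<le> k" by presburger
            then show ?thesis using R3[of k] True by simp
          qed simp
        qed
        then show ?thesis by (simp add: sum_distrib_left)
      qed
      finally have G: "GG n = sg n * PP n" using R7[OF False] by simp
      have "FF n = GG n + (-1) ^ (n - 1) * GG n" using R1[OF n2] .
      moreover have "(-1::int) ^ (n - 1) = 1" using False n2 by simp
      ultimately have "FF n = sg n * AA n" using G R3[OF n2] R7[OF False] by (simp add: algebra_simps)
      then show ?thesis using G False by simp
    qed
  qed
qed


lemma AA_card: "AA n = int (card {p\<in>sep_perms n. alternating p})"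
proof -
  have "(\<Sum>p\<in>{p\<in>sep_perms n. alternating p}. (1::int)) = (\<Sum>p\<in>sep_perms n. if alternating p then 1 else 0)"
    by (rule sum.inter_filter[OF finite_sep])
  then have "AA n = (\<Sum>p\<in>{p\<in>sep_perms n. alternating p}. (1::int))" unfolding AA_def by simp
  then show ?thesis by simp
qed

theorem theorem6p5:
  fixes n :: nat
  assumes "n \<ge> 1"
  shows "(\<Sum>p\<in>sep_perms n. (-1::int) ^ des p) =
           (if even n then 0 else (-1) ^ ((n - 1) div 2) * int (r ((n - 1) div 2)))"
proof -
  have M: "FF n = (if even n then 0 else sg n * AA n)" using main[OF assms] by blast
  show ?thesis
  proof (cases "even n")
    case True
    then show ?thesis using M unfolding FF_def by simp
  next
    case False
    have e1: "2 * ((n - 1) div 2) + 1 = n" using False assms by presburger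
    have e2: "n div 2 = (n - 1) div 2" using False by presburger
    have "int (r ((n - 1) div 2)) = AA n" unfolding r_def alt_sep_perms_def e1 AA_card by simp
    then show ?thesis using M False e2 unfolding FF_def sg_def by simp
  qed
qed

end
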